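(* Let $M,a,b,c$ be positive integers. The following are equivalent: (i) there is a three-link protocol solving MEQ-AD$(3,M)$ in which the ranges of $s_{AB},s_{AC},s_{BC}$ have sizes $a,b,c$ respectively (so its complexity is $\log_2(abc)$); (ii) there is a simple bipartite graph $G(U,V,E)$ with $|U|=a$, $|V|=b$, $|E|=M$ and no isolated vertices, together with a distance-2 edge coloring $W$ of $G$ using exactly $c$ colors. Moreover, when these hold, $ab\ge M$, $ac\ge M$ and $bc\ge M$.
   Context: Three nodes $A,B,C$ hold inputs $x_A,x_B,x_C\in\{1,\dots,M\}$. A three-link protocol is given by maps $s_{AB},s_{AC},s_{BC}$ from $\{1,\dots,M\}$ to finite sets: $A$ sends $s_{AB}(x_A)$ to $B$ and $s_{AC}(x_A)$ to $C$, and $B$ sends $s_{BC}(x_B)$ to $C$ over private point-to-point links. Each node outputs a bit: $EQ_A$ is a function of $x_A$, $EQ_B$ a function of $(x_B,s_{AB}(x_A))$, and $EQ_C$ a function of $(x_C,s_{AC}(x_A),s_{BC}(x_B))$. The protocol solves MEQ-AD$(3,M)$ if for all inputs, $EQ_A=EQ_B=EQ_C=0$ holds iff $x_A=x_B=x_C$. A distance-2 edge coloring of a graph assigns colors to edges so that any two distinct edges that share an endpoint, or are both adjacent to a common third edge, receive different colors. *)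

theory Defs
  imports Main
begin

text \<open>Inputs range over {1..M}. Messages are encoded as natural numbers (any finite
message set embeds into nat). Output bits are booleans: False encodes bit 0,
True encodes bit 1.\<close>

definition solves_MEQ_AD3 ::
  "nat \<Rightarrow> (nat \<Rightarrow> nat) \<Rightarrow> (nat \<Rightarrow> nat) \<Rightarrow> (nat \<Rightarrow> nat)
   \<Rightarrow> (nat \<Rightarrow> bool) \<Rightarrow> (nat \<Rightarrow> nat \<Rightarrow> bool) \<Rightarrow> (nat \<Rightarrow> nat \<Rightarrow> nat \<Rightarrow> bool) \<Rightarrow> bool"
where
  "solves_MEQ_AD3 M sAB sAC sBC EQA EQB EQC \<longleftrightarrow>
     (\<forall>xA\<in>{1..M}. \<forall>xB\<in>{1..M}. \<forall>xC\<in>{1..M}.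
        ((\<not> EQA xA \<and> \<not> EQB xB (sAB xA) \<and> \<not> EQC xC (sAC xA) (sBC xB))
          \<longleftrightarrow> (xA = xB \<and> xB = xC)))"

definition has_protocol :: "nat \<Rightarrow> nat \<Rightarrow> nat \<Rightarrow> nat \<Rightarrow> bool" where
  "has_protocol M a b c \<longleftrightarrow>
     (\<exists>sAB sAC sBC EQA EQB EQC.
        solves_MEQ_AD3 M sAB sAC sBC EQA EQB EQC \<and>
        card (sAB ` {1..M}) = a \<and> card (sAC ` {1..M}) = b \<and> card (sBC ` {1..M}) = c)"

definition bip_graph :: "nat set \<Rightarrow> nat set \<Rightarrow> (nat \<times> nat) set \<Rightarrow> bool" where
  "bip_graph U V E \<longleftrightarrow> finite U \<and> finite V \<and> U \<inter> V = {} \<and> E \<subseteq> U \<times> V"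

definition no_isolated :: "nat set \<Rightarrow> nat set \<Rightarrow> (nat \<times> nat) set \<Rightarrow> bool" where
  "no_isolated U V E \<longleftrightarrow>
     (\<forall>u\<in>U. \<exists>v. (u, v) \<in> E) \<and> (\<forall>v\<in>V. \<exists>u. (u, v) \<in> E)"

definition edges_adj :: "nat \<times> nat \<Rightarrow> nat \<times> nat \<Rightarrow> bool" where
  "edges_adj e f \<longleftrightarrow> fst e = fst f \<or> snd e = snd f"

definition dist2_edge_coloring :: "(nat \<times> nat) set \<Rightarrow> (nat \<times> nat \<Rightarrow> nat) \<Rightarrow> bool" where
  "dist2_edge_coloring E W \<longleftrightarrow>
     (\<forall>e\<in>E. \<forall>f\<in>E. e \<noteq> f \<longrightarrow>
        (edges_adj e f \<or>
         (\<exists>g\<in>E. g \<noteq> e \<and> g \<noteq> f \<and> edges_adj e g \<and> edges_adj g f))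
        \<longrightarrow> W e \<noteq> W f)"

definition has_graph_coloring :: "nat \<Rightarrow> nat \<Rightarrow> nat \<Rightarrow> nat \<Rightarrow> bool" where
  "has_graph_coloring M a b c \<longleftrightarrow>
     (\<exists>U V E W. bip_graph U V E \<and> card U = a \<and> card V = b \<and> card E = M \<and>
        no_isolated U V E \<and> dist2_edge_coloring E W \<and> card (W ` E) = c)"

end

theory Submission
  imports Defs
begin

lemma sv_diag:
  assumes "solves_MEQ_AD3 M sAB sAC sBC EQA EQB EQC" "x \<in> {1..M}"
  shows "\<not> EQA x" "\<not> EQB x (sAB x)" "\<not> EQC x (sAC x) (sBC x)"
  using assms unfolding solves_MEQ_AD3_def by blast+

lemma sv_gen:
  assumes "solves_MEQ_AD3 M sAB sAC sBC EQA EQB EQC"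
    "xA \<in> {1..M}" "xB \<in> {1..M}" "xC \<in> {1..M}"
    "\<not> EQA xA" "\<not> EQB xB (sAB xA)" "\<not> EQC xC (sAC xA) (sBC xB)"
  shows "xA = xB \<and> xB = xC"
  using assms unfolding solves_MEQ_AD3_def by blast

lemma sv_inj1:
  assumes S: "solves_MEQ_AD3 M sAB sAC sBC EQA EQB EQC" and x: "x \<in> {1..M}" and y: "y \<in> {1..M}"
    and "sAB x = sAB y" "sAC x = sAC y"
  shows "x = y"
  using sv_gen[OF S x y y] sv_diag[OF S x] sv_diag[OF S y] assms by metis

lemma sv_inj2:
  assumes S: "solves_MEQ_AD3 M sAB sAC sBC EQA EQB EQC" and x: "x \<in> {1..M}" and y: "y \<in> {1..M}"
    and "sAB x = sAB y" "sBC x = sBC y"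
  shows "x = y"
  using sv_gen[OF S x y x] sv_diag[OF S x] sv_diag[OF S y] assms by metis

lemma sv_inj3:
  assumes S: "solves_MEQ_AD3 M sAB sAC sBC EQA EQB EQC" and x: "x \<in> {1..M}" and y: "y \<in> {1..M}"
    and "sAC x = sAC y" "sBC x = sBC y"
  shows "x = y"
  using sv_gen[OF S x x y] sv_diag[OF S x] sv_diag[OF S y] assms by metis

lemma sv_path:
  assumes S: "solves_MEQ_AD3 M sAB sAC sBC EQA EQB EQC" and x: "x \<in> {1..M}" and y: "y \<in> {1..M}"
    and z: "z \<in> {1..M}"
    and "sAB x = sAB z" "sAC z = sAC y" "sBC x = sBC y"
  shows "x = y"
  using sv_gen[OF S z x y] sv_diag[OF S x] sv_diag[OF S y] sv_diag[OF S z] assms by metis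

lemma forward:
  assumes "has_protocol M a b c"
  shows "has_graph_coloring M a b c"
proof -
  obtain sAB sAC sBC EQA EQB EQC where S: "solves_MEQ_AD3 M sAB sAC sBC EQA EQB EQC"
    and ca: "card (sAB ` {1..M}) = a" and cb: "card (sAC ` {1..M}) = b"
    and cc: "card (sBC ` {1..M}) = c"
    using assms unfolding has_protocol_def by blast
  define ed where "ed = (\<lambda>x. (2 * sAB x, 2 * sAC x + 1))"
  define U where "U = (\<lambda>u. 2 * u) ` (sAB ` {1..M})"
  define V where "V = (\<lambda>v. 2 * v + 1) ` (sAC ` {1..M})"
  define E where "E = ed ` {1..M}"
  define W where "W = (\<lambda>p. sBC (inv_into {1..M} ed p))"
  have inj: "inj_on ed {1..M}"
    by (rule inj_onI) (auto simp: ed_def intro: sv_inj1[OF S])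
  have Winv: "x \<in> {1..M} \<Longrightarrow> W (ed x) = sBC x" for x
    using inj by (simp add: W_def)
  have bg: "bip_graph U V E"
    unfolding bip_graph_def U_def V_def E_def ed_def by auto presburger
  have cU: "card U = a" unfolding U_def using ca
    by (subst card_image) (auto simp: inj_on_def)
  have cV: "card V = b" unfolding V_def using cb
    by (subst card_image) (auto simp: inj_on_def)
  have cE: "card E = M" unfolding E_def using card_image[OF inj] by simp
  have ni: "no_isolated U V E"
    unfolding no_isolated_def U_def V_def E_def ed_def by auto
  have WE: "W ` E = sBC ` {1..M}"
    unfolding E_def image_image using Winv by (auto simp: image_iff)
  have d2: "dist2_edge_coloring E W"
    unfolding dist2_edge_coloring_def
  proof (intro ballI impI)
    fix e f assume eE: "e \<in> E" and fE: "f \<in> E" and ne: "e \<noteq> f"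
      and H: "edges_adj e f \<or> (\<exists>g\<in>E. g \<noteq> e \<and> g \<noteq> f \<and> edges_adj e g \<and> edges_adj g f)"
    obtain x where x: "x \<in> {1..M}" "e = ed x" using eE E_def by auto
    obtain y where y: "y \<in> {1..M}" "f = ed y" using fE E_def by auto
    have xy: "x \<noteq> y" using ne x y by auto
    show "W e \<noteq> W f"
    proof
      assume "W e = W f"
      hence C: "sBC x = sBC y" using Winv x y by simp
      from H show False
      proof
        assume "edges_adj e f"
        thus False using sv_inj2[OF S x(1) y(1) _ C] sv_inj3[OF S x(1) y(1) _ C] xy x y
          by (auto simp: edges_adj_def ed_def)
      next
        assume "\<exists>g\<in>E. g \<noteq> e \<and> g \<noteq> f \<and> edges_adj e g \<and> edges_adj g f"
        then obtain g where "g \<in> E" "edges_adj e g" "edges_adj g f" by blast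
        then obtain z where z: "z \<in> {1..M}" "edges_adj (ed x) (ed z)" "edges_adj (ed z) (ed y)"
          using E_def x y by auto
        hence "(sAB x = sAB z \<or> sAC x = sAC z) \<and> (sAB z = sAB y \<or> sAC z = sAC y)"
          by (auto simp: edges_adj_def ed_def)
        thus False
          using sv_inj2[OF S x(1) y(1) _ C] sv_inj3[OF S x(1) y(1) _ C]
            sv_path[OF S x(1) y(1) z(1) _ _ C] sv_path[OF S y(1) x(1) z(1) _ _ C[symmetric]] xy
          by metis
      qed
    qed
  qed
  show ?thesis unfolding has_graph_coloring_def
    apply (rule exI[of _ U], rule exI[of _ V], rule exI[of _ E], rule exI[of _ W])
    using bg cU cV cE ni d2 WE cc by simp
qed

lemma backward:
  assumes "has_graph_coloring M a b c"
  shows "has_protocol M a b c"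
proof -
  obtain U V E W where bg: "bip_graph U V E" and cU: "card U = a" and cV: "card V = b"
    and cE: "card E = M" and ni: "no_isolated U V E" and d2: "dist2_edge_coloring E W"
    and cW: "card (W ` E) = c"
    using assms unfolding has_graph_coloring_def by blast
  have sub: "E \<subseteq> U \<times> V" and fin: "finite E" using bg unfolding bip_graph_def
    by (auto intro: finite_subset)
  obtain f where f: "bij_betw f {1..M} E" using ex_bij_betw_nat_finite_1[OF fin] cE by auto
  have fim: "f ` {1..M} = E" and finj: "inj_on f {1..M}" using f by (auto simp: bij_betw_def)
  define sAB where "sAB = (\<lambda>x. fst (f x))"
  define sAC where "sAC = (\<lambda>x. snd (f x))"
  define sBC where "sBC = (\<lambda>x. W (f x))"
  define EQA where "EQA = (\<lambda>x::nat. False)"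
  define EQB where "EQB = (\<lambda>x m. m \<noteq> sAB x)"
  define EQC where "EQC = (\<lambda>x m1 m2. m1 \<noteq> sAC x \<or> m2 \<noteq> sBC x)"
  have fU: "fst ` E = U" using sub ni unfolding no_isolated_def by force
  have sV: "snd ` E = V" using sub ni unfolding no_isolated_def by force
  have i1: "sAB ` {1..M} = U" unfolding sAB_def using fU fim by (metis image_image)
  have i2: "sAC ` {1..M} = V" unfolding sAC_def using sV fim by (metis image_image)
  have i3: "sBC ` {1..M} = W ` E" unfolding sBC_def using fim by (metis image_image)
  have key: "xA = xB \<and> xB = xC"
    if x: "xA \<in> {1..M}" "xB \<in> {1..M}" "xC \<in> {1..M}"
      and h: "fst (f xA) = fst (f xB)" "snd (f xA) = snd (f xC)" "W (f xB) = W (f xC)"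
    for xA xB xC
  proof -
    have eA: "f xA \<in> E" and eB: "f xB \<in> E" and eC: "f xC \<in> E" using x fim by auto
    have D: "\<And>e g. e \<in> E \<Longrightarrow> g \<in> E \<Longrightarrow> e \<noteq> g \<Longrightarrow> (edges_adj e g \<or>
         (\<exists>h\<in>E. h \<noteq> e \<and> h \<noteq> g \<and> edges_adj e h \<and> edges_adj h g)) \<Longrightarrow> W e \<noteq> W g"
      using d2 unfolding dist2_edge_coloring_def by blast
    have BC: "f xB = f xC"
    proof (rule ccontr)
      assume ne: "f xB \<noteq> f xC"
      have "edges_adj (f xB) (f xC) \<or>
         (\<exists>h\<in>E. h \<noteq> f xB \<and> h \<noteq> f xC \<and> edges_adj (f xB) h \<and> edges_adj h (f xC))"
      proof (cases "f xA = f xB \<or> f xA = f xC")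
        case True thus ?thesis using h by (auto simp: edges_adj_def)
      next
        case False thus ?thesis using h eA by (auto simp: edges_adj_def)
      qed
      thus False using D[OF eB eC ne] h by simp
    qed
    hence "xB = xC" using finj x by (auto dest: inj_onD)
    hence "f xA = f xB" using h BC by (simp add: prod_eq_iff)
    hence "xA = xB" using finj x by (auto dest: inj_onD)
    thus ?thesis using \<open>xB = xC\<close> by simp
  qed
  have S: "solves_MEQ_AD3 M sAB sAC sBC EQA EQB EQC"
    unfolding solves_MEQ_AD3_def
  proof (intro ballI iffI)
    fix xA xB xC assume x: "xA \<in> {1..M}" "xB \<in> {1..M}" "xC \<in> {1..M}"
    { assume "\<not> EQA xA \<and> \<not> EQB xB (sAB xA) \<and> \<not> EQC xC (sAC xA) (sBC xB)"
      thus "xA = xB \<and> xB = xC" using key[OF x]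
        by (simp add: EQA_def EQB_def EQC_def sAB_def sAC_def sBC_def) }
    { assume "xA = xB \<and> xB = xC"
      thus "\<not> EQA xA \<and> \<not> EQB xB (sAB xA) \<and> \<not> EQC xC (sAC xA) (sBC xB)"
        by (simp add: EQA_def EQB_def EQC_def) }
  qed
  show ?thesis unfolding has_protocol_def
    apply (rule exI[of _ sAB], rule exI[of _ sAC], rule exI[of _ sBC])
    apply (rule exI[of _ EQA], rule exI[of _ EQB], rule exI[of _ EQC])
    using S i1 i2 i3 cU cV cW by simp
qed

lemma bounds:
  assumes "has_protocol M a b c"
  shows "a * b \<ge> M \<and> a * c \<ge> M \<and> b * c \<ge> M"
proof -
  obtain sAB sAC sBC EQA EQB EQC where S: "solves_MEQ_AD3 M sAB sAC sBC EQA EQB EQC"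
    and ca: "card (sAB ` {1..M}) = a" and cb: "card (sAC ` {1..M}) = b"
    and cc: "card (sBC ` {1..M}) = c"
    using assms unfolding has_protocol_def by blast
  have gen: "M \<le> card (P ` {1..M}) * card (Q ` {1..M})"
    if inj: "\<And>x y. x \<in> {1..M} \<Longrightarrow> y \<in> {1..M} \<Longrightarrow> P x = P y \<Longrightarrow> Q x = Q y \<Longrightarrow> x = y"
    for P Q :: "nat \<Rightarrow> nat"
  proof -
    have ij: "inj_on (\<lambda>x. (P x, Q x)) {1..M}" proof (rule inj_onI)
      fix x y assume h: "x \<in> {1..M}" "y \<in> {1..M}" "(P x, Q x) = (P y, Q y)"
      show "x = y" by (rule inj[OF h(1) h(2)]) (use h(3) in simp_all)
    qed
    have "M = card ((\<lambda>x. (P x, Q x)) ` {1..M})" using card_image[OF ij] by simp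
    also have "\<dots> \<le> card (P ` {1..M} \<times> Q ` {1..M})"
      by (rule card_mono) (simp, blast)
    finally show ?thesis by (simp add: card_cartesian_product)
  qed
  have 1: "M \<le> a * b" proof -
    have "M \<le> card (sAB ` {1..M}) * card (sAC ` {1..M})"
      by (rule gen) (rule sv_inj1[OF S])
    thus ?thesis by (simp only: ca cb)
  qed
  have 2: "M \<le> a * c" proof -
    have "M \<le> card (sAB ` {1..M}) * card (sBC ` {1..M})"
      by (rule gen) (rule sv_inj2[OF S])
    thus ?thesis by (simp only: ca cc)
  qed
  have 3: "M \<le> b * c" proof -
    have "M \<le> card (sAC ` {1..M}) * card (sBC ` {1..M})"
      by (rule gen) (rule sv_inj3[OF S])
    thus ?thesis by (simp only: cb cc)
  qed
  show ?thesis using 1 2 3 by simp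
qed

theorem theorem1:
  fixes M a b c :: nat
  assumes "M > 0" and "a > 0" and "b > 0" and "c > 0"
  shows "(has_protocol M a b c \<longleftrightarrow> has_graph_coloring M a b c) \<and>
         (has_protocol M a b c \<longrightarrow> a * b \<ge> M \<and> a * c \<ge> M \<and> b * c \<ge> M)"
  using forward backward bounds by blast

end
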